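(* Let $A$ be a finite set of points in the plane with distinct $x$-coordinates, sorted by $x$-coordinate, and let a vertical line $V$ split $A$ into its first half $A_1$ (left of $V$) and second half $A_2$ (right of $V$). Let $\mathit{UH}(A_1)$ and $\mathit{UH}(A_2)$ be the upper convex hulls of $A_1$ and $A_2$, each augmented with vertical dummy edges incident to its first and last vertices. Let $H_1$ and $H_2$ be (possibly non-contiguous) subsequences of the edges of $\mathit{UH}(A_1)$ and $\mathit{UH}(A_2)$, respectively, ordered by decreasing slope, each containing the dummy vertical edges of the respective hull as its first and last edges. For a non-vertical edge $e$ in $H_1$ (resp. $H_2$), let $d$ be the edge of $H_2$ (resp. $H_1$) with smallest slope greater than the slope of $e$, and let $f$ be the edge of $H_2$ (resp. $H_1$) with largest slope less than the slope of $e$ ($d$ and $f$ need not be consecutive edges of the hull). Then there is a comparison rule that takes as input only the three edges $d$, $e$, $f$ and whose outcome is always one of the following: (1) $e$ is assigned its correct label $L$ or $R$; or (2) $e$ is assigned the label $X$, and $d$ is correctly labeled $L$ and $f$ is correctly labeled $R$.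
   Context: Labels: an edge $g$ of $\mathit{UH}(A_1)$ or $\mathit{UH}(A_2)$ is correctly labeled $L$ if the line of slope equal to the slope of $g$ that is tangent to (supports from above) the upper hull $\mathit{UH}(A_1\cup A_2)$ is tangent to $\mathit{UH}(A_1)$, and is correctly labeled $R$ if that tangent line is tangent to $\mathit{UH}(A_2)$. The label $X$ means "not yet determined". The upper convex hull of a point set is the part of the boundary of its convex hull visible from above, viewed as a sequence of edges ordered left to right (equivalently, by decreasing slope). *)

theory Defs
  imports Complex_Main "HOL-Library.Extended_Real"
begin

type_synonym point = "real \<times> real"

text \<open>Edges of an (augmented) upper hull: a proper segment from its left endpoint to
its right endpoint, the vertical dummy edge incident to the first (leftmost) vertex
(slope +infinity), and the vertical dummy edge incident to the last (rightmost)
vertex (slope -infinity).\<close>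
datatype edge = Seg point point | VUp point | VDown point

fun eslope :: "edge \<Rightarrow> ereal" where
  "eslope (Seg p q) = ereal ((snd q - snd p) / (fst q - fst p))"
| "eslope (VUp p) = \<infinity>"
| "eslope (VDown p) = - \<infinity>"

definition is_vertical :: "edge \<Rightarrow> bool" where
  "is_vertical g \<longleftrightarrow> eslope g = \<infinity> \<or> eslope g = - \<infinity>"

definition below_line :: "point \<Rightarrow> point \<Rightarrow> point \<Rightarrow> bool" where
  "below_line p q r \<longleftrightarrow>
     (snd r - snd p) * (fst q - fst p) \<le> (snd q - snd p) * (fst r - fst p)"

definition on_line :: "point \<Rightarrow> point \<Rightarrow> point \<Rightarrow> bool" where
  "on_line p q r \<longleftrightarrow>
     (snd r - snd p) * (fst q - fst p) = (snd q - snd p) * (fst r - fst p)"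

text \<open>Edges of the upper convex hull of a finite point set (edges join consecutive
extreme points), augmented with the two vertical dummy edges.\<close>
definition uh_edges :: "point set \<Rightarrow> edge set" where
  "uh_edges A =
     {Seg p q | p q. p \<in> A \<and> q \<in> A \<and> fst p < fst q \<and> (\<forall>r\<in>A. below_line p q r)
                  \<and> (\<forall>r\<in>A. on_line p q r \<longrightarrow> fst p \<le> fst r \<and> fst r \<le> fst q)}
   \<union> {VUp p | p. p \<in> A \<and> (\<forall>q\<in>A. fst p \<le> fst q)}
   \<union> {VDown p | p. p \<in> A \<and> (\<forall>q\<in>A. fst q \<le> fst p)}"

datatype label = L | R | X

text \<open>The line of slope s supporting (tangent from above to) the upper hull of U
touches the upper hull of B (B a subset of U).\<close>
definition supports :: "point set \<Rightarrow> point set \<Rightarrow> ereal \<Rightarrow> bool" where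
  "supports B U s =
     (case s of
        ereal c \<Rightarrow> (\<exists>p\<in>B. \<forall>q\<in>U. snd q - c * fst q \<le> snd p - c * fst p)
      | PInfty \<Rightarrow> (\<exists>p\<in>B. \<forall>q\<in>U. fst p \<le> fst q)
      | MInfty \<Rightarrow> (\<exists>p\<in>B. \<forall>q\<in>U. fst q \<le> fst p))"

definition correctly_labeled :: "point set \<Rightarrow> point set \<Rightarrow> edge \<Rightarrow> label \<Rightarrow> bool" where
  "correctly_labeled A1 A2 g lab \<longleftrightarrow>
     (lab = L \<and> supports A1 (A1 \<union> A2) (eslope g))
   \<or> (lab = R \<and> supports A2 (A1 \<union> A2) (eslope g))"

end

theory Submission
  imports Defs
begin

definition val :: "real \<Rightarrow> point \<Rightarrow> real" where "val c p = snd p - c * fst p"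
definition sl :: "point \<Rightarrow> point \<Rightarrow> real" where "sl p q = (snd q - snd p) / (fst q - fst p)"

lemma seg_hull:
  assumes "Seg p q \<in> uh_edges S"
  shows "p \<in> S" "q \<in> S" "fst p < fst q" "\<And>r. r \<in> S \<Longrightarrow> val (sl p q) r \<le> val (sl p q) p"
        "val (sl p q) q = val (sl p q) p"
proof -
  from assms have h: "p \<in> S" "q \<in> S" "fst p < fst q" "\<forall>r\<in>S. below_line p q r"
    unfolding uh_edges_def by auto
  then show "p \<in> S" "q \<in> S" "fst p < fst q" by auto
  have k: "sl p q * (fst q - fst p) = snd q - snd p" using h(3) unfolding sl_def by simp
  then show "val (sl p q) q = val (sl p q) p" unfolding val_def by (simp add: algebra_simps)
  fix r assume "r \<in> S"
  then have "(snd r - snd p) * (fst q - fst p) \<le> (snd q - snd p) * (fst r - fst p)"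
    using h(4) unfolding below_line_def by auto
  also have "\<dots> = (sl p q * (fst q - fst p)) * (fst r - fst p)" by (simp only: k)
  also have "\<dots> = (sl p q * (fst r - fst p)) * (fst q - fst p)" by (simp add: algebra_simps)
  finally have "snd r - snd p \<le> sl p q * (fst r - fst p)" using h(3) by simp
  then show "val (sl p q) r \<le> val (sl p q) p" unfolding val_def by (simp add: algebra_simps)
qed

lemma vup_hull: "VUp p \<in> uh_edges S \<Longrightarrow> p \<in> S \<and> (\<forall>q\<in>S. fst p \<le> fst q)"
  unfolding uh_edges_def by auto
lemma vdown_hull: "VDown p \<in> uh_edges S \<Longrightarrow> p \<in> S \<and> (\<forall>q\<in>S. fst q \<le> fst p)"
  unfolding uh_edges_def by auto

lemma ex_max_real:
  fixes g :: "'a \<Rightarrow> real"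
  assumes "finite B" "B \<noteq> {}"
  shows "\<exists>p\<in>B. \<forall>x\<in>B. g x \<le> g p"
proof -
  have "Max (g ` B) \<in> g ` B" using assms by simp
  then obtain p where "p \<in> B" "g p = Max (g ` B)" by auto
  moreover have "\<forall>x\<in>B. g x \<le> Max (g ` B)" using assms by simp
  ultimately show ?thesis by metis
qed

lemma L_sup:
  assumes "finite B" "b \<in> B" "\<forall>c\<in>C. val s c \<le> val s b"
  shows "supports B (B \<union> C) (ereal s)"
proof -
  obtain p where p: "p \<in> B" "\<forall>x\<in>B. val s x \<le> val s p"
    using ex_max_real[of B "val s"] assms by blast
  have "\<forall>q\<in>B \<union> C. val s q \<le> val s p" using p assms(2,3) by force
  then show ?thesis using p(1) unfolding supports_def val_def by auto
qed

lemma sup_up: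
  assumes "finite A1" "A1 \<noteq> {}" "\<forall>a\<in>A1. \<forall>b\<in>A2. fst a < fst b"
  shows "supports A1 (A1 \<union> A2) \<infinity>"
proof -
  obtain p where p: "p \<in> A1" "\<forall>x\<in>A1. - fst x \<le> - fst p"
    using ex_max_real[of A1 "\<lambda>x. - fst x"] assms by blast
  have "\<forall>q\<in>A1 \<union> A2. fst p \<le> fst q"
    using p assms(3) by (metis UnE less_imp_le neg_le_iff_le)
  then show ?thesis using p(1) unfolding supports_def by auto
qed

lemma sup_down:
  assumes "finite A2" "A2 \<noteq> {}" "\<forall>a\<in>A1. \<forall>b\<in>A2. fst a < fst b"
  shows "supports A2 (A1 \<union> A2) (-\<infinity>)"
proof -
  obtain p where p: "p \<in> A2" "\<forall>x\<in>A2. fst x \<le> fst p"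
    using ex_max_real[of A2 "\<lambda>x. fst x"] assms by blast
  have "\<forall>q\<in>A1 \<union> A2. fst q \<le> fst p"
    using p assms(3) by (metis UnE less_imp_le)
  then show ?thesis using p(1) unfolding supports_def by auto
qed

fun rp :: "edge \<Rightarrow> point" where
  "rp (Seg p q) = q" | "rp (VUp p) = p" | "rp (VDown p) = p"
fun lp :: "edge \<Rightarrow> point" where
  "lp (Seg p q) = p" | "lp (VUp p) = p" | "lp (VDown p) = p"

definition rl :: "edge \<Rightarrow> edge \<Rightarrow> edge \<Rightarrow> label" where
 "rl d e f = (case e of Seg a b \<Rightarrow>
   (if fst b < fst (rp d) then
      (if val (sl a b) a \<le> val (sl a b) (rp d) then R
       else if (case f of Seg p p' \<Rightarrow> snd p + sl p p' * (fst (rp d) - fst p) \<le> snd a + sl a b * (fst (rp d) - fst a) | _ \<Rightarrow> False) then L else X)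
    else
      (if val (sl a b) a \<le> val (sl a b) (lp f) then L
       else if (case d of Seg u v \<Rightarrow> snd u + sl u v * (fst (lp f) - fst u) \<le> snd a + sl a b * (fst (lp f) - fst a) | _ \<Rightarrow> False) then R else X))
  | _ \<Rightarrow> X)"

lemma left_case:
  assumes fin: "finite A1" "finite A2" "A1 \<noteq> {}" "A2 \<noteq> {}"
    and sep: "\<forall>a\<in>A1. \<forall>b\<in>A2. fst a < fst b"
    and inj: "inj_on fst (A1 \<union> A2)"
    and he: "e \<in> uh_edges A1" "\<not> is_vertical e"
    and hd: "d \<in> uh_edges A2" and hf: "f \<in> uh_edges A2"
    and sd: "eslope e < eslope d" and sf: "eslope f < eslope e"
  shows "(rl d e f = L \<and> correctly_labeled A1 A2 e L)
       \<or> (rl d e f = R \<and> correctly_labeled A1 A2 e R)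
       \<or> (rl d e f = X \<and> correctly_labeled A1 A2 d L \<and> correctly_labeled A1 A2 f R)"
proof -
  obtain a b where e: "e = Seg a b" using he(2) by (cases e) (auto simp: is_vertical_def)
  define s where "s = sl a b"
  have es: "eslope e = ereal s" unfolding e s_def sl_def by simp
  note eh = seg_hull[OF he(1)[unfolded e], folded s_def]
  define q where "q = rp d"
  have qA2: "q \<in> A2" unfolding q_def using hd sd es
    by (cases d) (auto dest: seg_hull vup_hull)
  have bq: "fst b < fst q" using sep eh(2) qA2 by auto
  have aq: "fst a < fst q" using sep eh(1) qA2 by auto
  have rl_eq: "rl d e f = (if val s a \<le> val s q then R
       else if (case f of Seg p p' \<Rightarrow> snd p + sl p p' * (fst q - fst p) \<le> snd a + s * (fst q - fst a) | _ \<Rightarrow> False) then L else X)"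
    unfolding rl_def e q_def s_def using bq[unfolded q_def] by simp
  have U: "A1 \<union> A2 = A2 \<union> A1" by blast
  show ?thesis
  proof (cases "val s a \<le> val s q")
    case True
    have "supports A2 (A1 \<union> A2) (ereal s)"
      unfolding U by (rule L_sup[OF fin(2) qA2]) (use True eh(4) in force)
    then show ?thesis using True rl_eq es unfolding correctly_labeled_def by simp
  next
    case False
    then have qa: "val s q < val s a" by simp
    have dL: "correctly_labeled A1 A2 d L"
    proof (cases d)
      case (Seg u v)
      note dh = seg_hull[OF hd[unfolded Seg]]
      have ssd: "s < sl u v" using sd es Seg unfolding sl_def by simp
      have qv: "q = v" using Seg q_def by simp
      have "(sl u v - s) * fst a < (sl u v - s) * fst q" using ssd aq by simp
      then have "val (sl u v) q < val (sl u v) a" using qa unfolding val_def by (simp add: algebra_simps)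
      moreover have "\<forall>c\<in>A2. val (sl u v) c \<le> val (sl u v) q" using dh qv by auto
      ultimately have "supports A1 (A1 \<union> A2) (ereal (sl u v))"
        by (intro L_sup[OF fin(1) eh(1)]) force
      then show ?thesis using Seg unfolding correctly_labeled_def sl_def by simp
    next
      case (VUp p)
      then show ?thesis using sup_up[OF fin(1) fin(3) sep] unfolding correctly_labeled_def by simp
    next
      case (VDown p)
      then show ?thesis using sd by simp
    qed
    show ?thesis
    proof (cases "case f of Seg p p' \<Rightarrow> snd p + sl p p' * (fst q - fst p) \<le> snd a + s * (fst q - fst a) | _ \<Rightarrow> False")
      case True
      then obtain p p' where f: "f = Seg p p'" and c2: "snd p + sl p p' * (fst q - fst p) \<le> snd a + s * (fst q - fst a)"
        by (cases f) auto
      note fh = seg_hull[OF hf[unfolded f]]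
      have ssf: "sl p p' < s" using sf es f unfolding sl_def by simp
      have "\<forall>c\<in>A2. val s c \<le> val s a"
      proof
        fix c assume c: "c \<in> A2"
        show "val s c \<le> val s a"
        proof (cases "fst c \<le> fst q")
          case True
          show ?thesis
          proof (cases d)
            case (Seg u v)
            note dh = seg_hull[OF hd[unfolded Seg]]
            have ssd: "s < sl u v" using sd es Seg unfolding sl_def by simp
            have qv: "q = v" using Seg q_def by simp
            have "val (sl u v) c \<le> val (sl u v) q" using dh qv c by auto
            moreover have "(sl u v - s) * fst c \<le> (sl u v - s) * fst q" using ssd True by simp
            ultimately have "val s c \<le> val s q" unfolding val_def by (simp add: algebra_simps)
            then show ?thesis using qa by simp
          next
            case (VUp p0)
            then have "q = p0" "\<forall>x\<in>A2. fst p0 \<le> fst x" using q_def vup_hull hd by auto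
            then have "fst c = fst q" using True c by force
            then have "c = q" using inj c qA2 by (auto dest: inj_onD)
            then show ?thesis using qa by simp
          next
            case (VDown p0)
            then show ?thesis using sd by simp
          qed
        next
          case False
          have "val (sl p p') c \<le> val (sl p p') p" using fh c by auto
          moreover have "(s - sl p p') * fst q \<le> (s - sl p p') * fst c" using ssf False by simp
          ultimately show ?thesis using c2 unfolding val_def by (simp add: algebra_simps)
        qed
      qed
      then have "supports A1 (A1 \<union> A2) (ereal s)" by (intro L_sup[OF fin(1) eh(1)])
      then show ?thesis using True rl_eq qa es unfolding correctly_labeled_def by simp
    next
      case c3: False
      have fR: "correctly_labeled A1 A2 f R"
      proof (cases f)
        case (Seg p p')
        note fh = seg_hull[OF hf[unfolded Seg]]
        have ssf: "sl p p' < s" using sf es Seg unfolding sl_def by simp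
        have c2: "snd a + s * (fst q - fst a) < snd p + sl p p' * (fst q - fst p)" using c3 Seg by simp
        have "\<forall>c\<in>A1. val (sl p p') c \<le> val (sl p p') p"
        proof
          fix c assume c: "c \<in> A1"
          have "val s c \<le> val s a" using eh c by auto
          moreover have "(s - sl p p') * fst c \<le> (s - sl p p') * fst q" using ssf sep c qA2
            by (intro mult_left_mono) (auto intro: less_imp_le)
          ultimately show "val (sl p p') c \<le> val (sl p p') p" using c2 unfolding val_def by (simp add: algebra_simps)
        qed
        then have "supports A2 (A1 \<union> A2) (ereal (sl p p'))"
          unfolding U by (intro L_sup[OF fin(2) fh(1)])
        then show ?thesis using Seg unfolding correctly_labeled_def sl_def by simp
      next
        case (VUp p0) then show ?thesis using sf by simp
      next
        case (VDown p0) then show ?thesis using sup_down[OF fin(2) fin(4) sep] unfolding correctly_labeled_def by simp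
      qed
      show ?thesis using c3 qa rl_eq dL fR by simp
    qed
  qed
qed

lemma right_case:
  assumes fin: "finite A1" "finite A2" "A1 \<noteq> {}" "A2 \<noteq> {}"
    and sep: "\<forall>a\<in>A1. \<forall>b\<in>A2. fst a < fst b"
    and inj: "inj_on fst (A1 \<union> A2)"
    and he: "e \<in> uh_edges A2" "\<not> is_vertical e"
    and hd: "d \<in> uh_edges A1" and hf: "f \<in> uh_edges A1"
    and sd: "eslope e < eslope d" and sf: "eslope f < eslope e"
  shows "(rl d e f = L \<and> correctly_labeled A1 A2 e L)
       \<or> (rl d e f = R \<and> correctly_labeled A1 A2 e R)
       \<or> (rl d e f = X \<and> correctly_labeled A1 A2 d L \<and> correctly_labeled A1 A2 f R)"
proof -
  obtain a b where e: "e = Seg a b" using he(2) by (cases e) (auto simp: is_vertical_def)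
  define s where "s = sl a b"
  have es: "eslope e = ereal s" unfolding e s_def sl_def by simp
  note eh = seg_hull[OF he(1)[unfolded e], folded s_def]
  define p where "p = lp f"
  have pA1: "p \<in> A1" unfolding p_def using hf sf es
    by (cases f) (auto dest: seg_hull vdown_hull)
  have rdA1: "rp d \<in> A1" using hd sd es
    by (cases d) (auto dest: seg_hull vup_hull)
  have bq: "\<not> fst b < fst (rp d)" using sep eh(2) rdA1 by force
  have pa: "fst p < fst a" using sep eh(1) pA1 by auto
  have rl_eq: "rl d e f = (if val s a \<le> val s p then L
       else if (case d of Seg u v \<Rightarrow> snd u + sl u v * (fst p - fst u) \<le> snd a + s * (fst p - fst a) | _ \<Rightarrow> False) then R else X)"
    unfolding rl_def e p_def s_def using bq by simp
  have U: "A1 \<union> A2 = A2 \<union> A1" by blast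
  show ?thesis
  proof (cases "val s a \<le> val s p")
    case True
    have "supports A1 (A1 \<union> A2) (ereal s)"
      by (rule L_sup[OF fin(1) pA1]) (use True eh(4) in force)
    then show ?thesis using True rl_eq es unfolding correctly_labeled_def by simp
  next
    case False
    then have qa: "val s p < val s a" by simp
    have fR: "correctly_labeled A1 A2 f R"
    proof (cases f)
      case (Seg u v)
      note fh = seg_hull[OF hf[unfolded Seg]]
      have ssf: "sl u v < s" using sf es Seg unfolding sl_def by simp
      have pu: "p = u" using Seg p_def by simp
      have "(s - sl u v) * fst p < (s - sl u v) * fst a" using ssf pa by simp
      then have "val (sl u v) p < val (sl u v) a" using qa unfolding val_def by (simp add: algebra_simps)
      moreover have "\<forall>c\<in>A1. val (sl u v) c \<le> val (sl u v) p" using fh pu by auto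
      ultimately have "supports A2 (A1 \<union> A2) (ereal (sl u v))"
        unfolding U by (intro L_sup[OF fin(2) eh(1)]) force
      then show ?thesis using Seg unfolding correctly_labeled_def sl_def by simp
    next
      case (VUp p0)
      then show ?thesis using sf by simp
    next
      case (VDown p0)
      then show ?thesis using sup_down[OF fin(2) fin(4) sep] unfolding correctly_labeled_def by simp
    qed
    show ?thesis
    proof (cases "case d of Seg u v \<Rightarrow> snd u + sl u v * (fst p - fst u) \<le> snd a + s * (fst p - fst a) | _ \<Rightarrow> False")
      case True
      then obtain u v where d: "d = Seg u v" and c2: "snd u + sl u v * (fst p - fst u) \<le> snd a + s * (fst p - fst a)"
        by (cases d) auto
      note dh = seg_hull[OF hd[unfolded d]]
      have ssd: "s < sl u v" using sd es d unfolding sl_def by simp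
      have "\<forall>c\<in>A1. val s c \<le> val s a"
      proof
        fix c assume c: "c \<in> A1"
        show "val s c \<le> val s a"
        proof (cases "fst p \<le> fst c")
          case True
          show ?thesis
          proof (cases f)
            case (Seg u' v')
            note fh = seg_hull[OF hf[unfolded Seg]]
            have ssf: "sl u' v' < s" using sf es Seg unfolding sl_def by simp
            have pu: "p = u'" using Seg p_def by simp
            have "val (sl u' v') c \<le> val (sl u' v') p" using fh pu c by auto
            moreover have "(s - sl u' v') * fst p \<le> (s - sl u' v') * fst c" using ssf True by simp
            ultimately have "val s c \<le> val s p" unfolding val_def by (simp add: algebra_simps)
            then show ?thesis using qa by simp
          next
            case (VDown p0)
            then have "p = p0" "\<forall>x\<in>A1. fst x \<le> fst p0" using p_def vdown_hull hf by auto
            then have "fst c = fst p" using True c by force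
            then have "c = p" using inj c pA1 by (auto dest: inj_onD)
            then show ?thesis using qa by simp
          next
            case (VUp p0)
            then show ?thesis using sf by simp
          qed
        next
          case False
          have "val (sl u v) c \<le> val (sl u v) u" using dh c by auto
          moreover have "(sl u v - s) * fst c \<le> (sl u v - s) * fst p" using ssd False by simp
          ultimately show ?thesis using c2 unfolding val_def by (simp add: algebra_simps)
        qed
      qed
      then have "supports A2 (A1 \<union> A2) (ereal s)" unfolding U by (intro L_sup[OF fin(2) eh(1)])
      then show ?thesis using True rl_eq qa es unfolding correctly_labeled_def by simp
    next
      case c3: False
      have dL: "correctly_labeled A1 A2 d L"
      proof (cases d)
        case (Seg u v)
        note dh = seg_hull[OF hd[unfolded Seg]]
        have ssd: "s < sl u v" using sd es Seg unfolding sl_def by simp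
        have c2: "snd a + s * (fst p - fst a) < snd u + sl u v * (fst p - fst u)" using c3 Seg by simp
        have "\<forall>c\<in>A2. val (sl u v) c \<le> val (sl u v) u"
        proof
          fix c assume c: "c \<in> A2"
          have "val s c \<le> val s a" using eh c by auto
          moreover have "(sl u v - s) * fst p \<le> (sl u v - s) * fst c" using ssd sep c pA1
            by (intro mult_left_mono) (auto intro: less_imp_le)
          ultimately show "val (sl u v) c \<le> val (sl u v) u" using c2 unfolding val_def by (simp add: algebra_simps)
        qed
        then have "supports A1 (A1 \<union> A2) (ereal (sl u v))"
          by (intro L_sup[OF fin(1) dh(1)])
        then show ?thesis using Seg unfolding correctly_labeled_def sl_def by simp
      next
        case (VDown p0) then show ?thesis using sd by simp
      next
        case (VUp p0) then show ?thesis using sup_up[OF fin(1) fin(3) sep] unfolding correctly_labeled_def by simp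
      qed
      show ?thesis using c3 qa rl_eq dL fR by simp
    qed
  qed
qed

lemma main_aux:
  assumes "finite A" "inj_on fst A" "A1 = {p \<in> A. fst p < x0}" "A2 = {p \<in> A. x0 < fst p}"
    "A = A1 \<union> A2" "A1 \<noteq> {}" "A2 \<noteq> {}" "H1 \<subseteq> uh_edges A1" "H2 \<subseteq> uh_edges A2"
    and hc: "(Ha = H1 \<and> Hb = H2) \<or> (Ha = H2 \<and> Hb = H1)"
    and kk: "e \<in> Ha" "\<not> is_vertical e" "d \<in> Hb" "eslope e < eslope d" "f \<in> Hb" "eslope f < eslope e"
  shows "(rl d e f = L \<and> correctly_labeled A1 A2 e L)
              \<or> (rl d e f = R \<and> correctly_labeled A1 A2 e R)
              \<or> (rl d e f = X \<and> correctly_labeled A1 A2 d L \<and> correctly_labeled A1 A2 f R)"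
proof -
  note hA = assms
  have fin: "finite A1" "finite A2" "A1 \<noteq> {}" "A2 \<noteq> {}" using hA(1,3,4,6,7) by auto
  have sep: "\<forall>a\<in>A1. \<forall>b\<in>A2. fst a < fst b" using hA(3,4) by auto
  have inj: "inj_on fst (A1 \<union> A2)" using hA(2,5) by simp
  show ?thesis
  proof (cases "Ha = H1 \<and> Hb = H2")
    case True
    then have "e \<in> uh_edges A1" "d \<in> uh_edges A2" "f \<in> uh_edges A2"
      using hA(8,9) kk by blast+
    from left_case[OF fin sep inj this(1) kk(2) this(2,3) kk(4,6)] show ?thesis .
  next
    case False
    then have "Ha = H2 \<and> Hb = H1" using hc by blast
    then have "e \<in> uh_edges A2" "d \<in> uh_edges A1" "f \<in> uh_edges A1"
      using hA(8,9) kk by blast+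
    from right_case[OF fin sep inj this(1) kk(2) this(2,3) kk(4,6)] show ?thesis .
  qed
qed

theorem lemma1:
  shows "\<exists>rule :: edge \<Rightarrow> edge \<Rightarrow> edge \<Rightarrow> label.
    \<forall>(A :: point set) A1 A2 (x0 :: real) H1 H2.
      finite A \<and> inj_on fst A
      \<and> A1 = {p \<in> A. fst p < x0} \<and> A2 = {p \<in> A. x0 < fst p} \<and> A = A1 \<union> A2
      \<and> A1 \<noteq> {} \<and> A2 \<noteq> {}
      \<and> (card A1 = card A2 \<or> card A1 = card A2 + 1 \<or> card A2 = card A1 + 1)
      \<and> H1 \<subseteq> uh_edges A1 \<and> (\<forall>g\<in>uh_edges A1. is_vertical g \<longrightarrow> g \<in> H1)
      \<and> H2 \<subseteq> uh_edges A2 \<and> (\<forall>g\<in>uh_edges A2. is_vertical g \<longrightarrow> g \<in> H2)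
      \<longrightarrow> (\<forall>Ha Hb e d f.
            ((Ha = H1 \<and> Hb = H2) \<or> (Ha = H2 \<and> Hb = H1))
            \<and> e \<in> Ha \<and> \<not> is_vertical e
            \<and> d \<in> Hb \<and> eslope e < eslope d
            \<and> (\<forall>g\<in>Hb. eslope e < eslope g \<longrightarrow> eslope d \<le> eslope g)
            \<and> f \<in> Hb \<and> eslope f < eslope e
            \<and> (\<forall>g\<in>Hb. eslope g < eslope e \<longrightarrow> eslope g \<le> eslope f)
            \<longrightarrow> (rule d e f = L \<and> correctly_labeled A1 A2 e L)
              \<or> (rule d e f = R \<and> correctly_labeled A1 A2 e R)
              \<or> (rule d e f = X \<and> correctly_labeled A1 A2 d L \<and> correctly_labeled A1 A2 f R))"
    apply (rule exI[of _ rl])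
  apply (intro allI impI)
  apply (elim conjE)
  apply (rule main_aux)
                 apply assumption+
  done

end
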